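(* Let $\mathcal{H}=(\mathcal{V},\mathcal{E})$ be a $3$-uniform Berge-$K_4$-saturated hypergraph and let $u,v\in\mathcal{V}$ be distinct. If $\mathcal{T}$ can be added on $(u,v)$, then for every positive integer $k$, $k$ copies of $\mathcal{T}$ can be added on $(u,v)$ simultaneously; that is, the hypergraph obtained from $\mathcal{H}$ by adding $2k$ new vertices $a_1^i,a_2^i$ ($1\le i\le k$) and the $2k$ hyperedges $a_1^ia_2^iu,\ a_1^ia_2^iv$ ($1\le i\le k$) is Berge-$K_4$-saturated. Moreover, it is impossible to add two copies of $\mathcal{T}$ simultaneously on two distinct pairs of vertices of $\mathcal{V}$: if $(u,v)\neq(u',v')$ are distinct pairs of vertices of $\mathcal V$, the hypergraph obtained from $\mathcal{H}$ by adding new vertices $a_1,a_2,a_3,a_4$ and hyperedges $a_1a_2u,a_1a_2v,a_3a_4u',a_3a_4v'$ is not Berge-$K_4$-saturated.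
   Context: A $3$-graph has all hyperedges of size $3$. A $3$-graph contains a Berge-$K_4$ if there are $4$ distinct vertices and $6$ distinct hyperedges, one containing each of the $6$ pairs of these vertices. A $3$-graph $\mathcal{H}$ is Berge-$K_4$-saturated if it contains no Berge-$K_4$, but for every $3$-set $e$ of vertices with $e\notin E(\mathcal{H})$, $\mathcal{H}+e$ contains a Berge-$K_4$. $\mathcal{T}$ denotes the hypergraph on $\{a_1,a_2,x_1,x_2\}$ with hyperedges $a_1a_2x_1,a_1a_2x_2$. We say $\mathcal{T}$ can be added on $(u,v)$ if the hypergraph obtained from $\mathcal{H}$ by adding two new vertices $a_1,a_2$ and the hyperedges $a_1a_2u,a_1a_2v$ (i.e. identifying $x_1,x_2$ with $u,v$) is Berge-$K_4$-saturated. *)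

theory Defs
  imports Main
begin

definition three_graph :: "'a set \<Rightarrow> 'a set set \<Rightarrow> bool" where
  "three_graph V E \<longleftrightarrow> (\<forall>e\<in>E. e \<subseteq> V \<and> card e = 3)"

text \<open>Berge-K4: 4 distinct vertices and 6 distinct hyperedges, one containing each of
  the 6 pairs, i.e. an injective choice of a containing hyperedge for each pair.\<close>
definition has_berge_K4 :: "'a set set \<Rightarrow> bool" where
  "has_berge_K4 E \<longleftrightarrow> (\<exists>Q f. card Q = 4 \<and>
      inj_on f {p. p \<subseteq> Q \<and> card p = 2} \<and>
      (\<forall>p. p \<subseteq> Q \<and> card p = 2 \<longrightarrow> f p \<in> E \<and> p \<subseteq> f p))"

definition berge_K4_saturated :: "'a set \<Rightarrow> 'a set set \<Rightarrow> bool" where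
  "berge_K4_saturated V E \<longleftrightarrow> three_graph V E \<and> \<not> has_berge_K4 E \<and>
     (\<forall>e. e \<subseteq> V \<and> card e = 3 \<and> e \<notin> E \<longrightarrow> has_berge_K4 (insert e E))"

definition addT_V :: "'a set \<Rightarrow> nat \<Rightarrow> ('a + nat \<times> nat) set" where
  "addT_V V k = Inl ` V \<union> {Inr (i, j) | i j. i < k \<and> j < 2}"

definition addT_E :: "'a set set \<Rightarrow> nat \<Rightarrow> 'a \<Rightarrow> 'a \<Rightarrow> ('a + nat \<times> nat) set set" where
  "addT_E E k u v = (image Inl) ` E \<union>
     {{Inr (i, 0), Inr (i, 1), Inl w} | i w. i < k \<and> (w = u \<or> w = v)}"

definition addT2_V :: "'a set \<Rightarrow> ('a + nat \<times> nat) set" where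
  "addT2_V V = Inl ` V \<union> {Inr (i, j) | i j. i < 2 \<and> j < 2}"

definition addT2_E :: "'a set set \<Rightarrow> 'a \<Rightarrow> 'a \<Rightarrow> 'a \<Rightarrow> 'a \<Rightarrow> ('a + nat \<times> nat) set set" where
  "addT2_E E u v u' v' = (image Inl) ` E \<union>
     {{Inr (0, 0), Inr (0, 1), Inl u}, {Inr (0, 0), Inr (0, 1), Inl v},
      {Inr (1, 0), Inr (1, 1), Inl u'}, {Inr (1, 0), Inr (1, 1), Inl v'}}"

end

theory Submission
  imports Defs
begin


definition K4w :: "'b set set \<Rightarrow> 'b set \<Rightarrow> ('b set \<Rightarrow> 'b set) \<Rightarrow> bool" where
"K4w F Q f \<longleftrightarrow> card Q = 4 \<and> inj_on f {p. p \<subseteq> Q \<and> card p = 2} \<and>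
   (\<forall>p. p \<subseteq> Q \<and> card p = 2 \<longrightarrow> f p \<in> F \<and> p \<subseteq> f p)"

lemma has_K4_iff: "has_berge_K4 F \<longleftrightarrow> (\<exists>Q f. K4w F Q f)"
  by (simp add: has_berge_K4_def K4w_def)

lemma K4w_finite: "K4w F Q f \<Longrightarrow> finite Q"
  unfolding K4w_def by (metis card.infinite zero_neq_numeral)

lemma K4w_pair: assumes "K4w F Q f" "x \<in> Q" "y \<in> Q" "x \<noteq> y"
  shows "f {x,y} \<in> F \<and> x \<in> f {x,y} \<and> y \<in> f {x,y}"
proof -
  have "{x,y} \<subseteq> Q" "card {x,y} = 2" using assms by auto
  then show ?thesis using assms(1) unfolding K4w_def by blast
qed

lemma K4w_cover: assumes "K4w F Q f" "q \<in> Q" shows "\<exists>g\<in>F. q \<in> g"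
proof -
  have "card (Q - {q}) = 3" using assms K4w_finite[OF assms(1)] by (simp add: K4w_def)
  then obtain x where "x \<in> Q - {q}" by (metis card.empty empty_iff equals0I zero_neq_numeral)
  then show ?thesis using K4w_pair[OF assms(1) assms(2), of x] by auto
qed

lemma K4w_deg: assumes K: "K4w F Q f" and q: "q \<in> Q" and sub: "{g\<in>F. q \<in> g} \<subseteq> G"
  and fin: "finite G" and c: "card G \<le> 3"
  shows "card G = 3 \<and> (\<forall>g\<in>G. \<exists>x\<in>Q. x \<noteq> q \<and> f {q,x} = g)"
proof -
  have finQ: "finite Q" using K4w_finite[OF K] .
  let ?Pq = "(\<lambda>x. {q,x}) ` (Q - {q})"
  have inj1: "inj_on (\<lambda>x. {q,x}) (Q - {q})" by (auto simp: inj_on_def doubleton_eq_iff)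
  have c3: "card (Q - {q}) = 3" using K q finQ by (simp add: K4w_def)
  have cP: "card ?Pq = 3" using card_image[OF inj1] c3 by simp
  have PP: "?Pq \<subseteq> {p. p \<subseteq> Q \<and> card p = 2}" using q by auto
  have injf: "inj_on f ?Pq" using K PP unfolding K4w_def by (meson inj_on_subset)
  have cf: "card (f ` ?Pq) = 3" using card_image[OF injf] cP by simp
  have fG: "f ` ?Pq \<subseteq> G"
  proof
    fix g assume "g \<in> f ` ?Pq"
    then obtain x where x: "x \<in> Q" "x \<noteq> q" "g = f {q,x}" by auto
    then show "g \<in> G" using K4w_pair[OF K q x(1)] sub by auto
  qed
  have "card G = 3" using card_mono[OF fin fG] cf c by simp
  moreover have "f ` ?Pq = G" using card_subset_eq[OF fin fG] cf \<open>card G = 3\<close> by simp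
  ultimately show ?thesis by auto
qed

lemma pairs6: assumes "card Q = 4" shows "card {p. p \<subseteq> Q \<and> card p = 2} = 6"
proof -
  have "finite Q" using assms by (metis card.infinite zero_neq_numeral)
  then have "card {p. p \<subseteq> Q \<and> card p = 2} = 4 choose 2" using n_subsets assms by metis
  also have "\<dots> = 6" by (simp add: numeral_eq_Suc)
  finally show ?thesis .
qed

lemma K4w_two: assumes K: "K4w F Q f" and q: "q1 \<in> Q" "q2 \<in> Q" "q1 \<noteq> q2"
  and sub: "{g\<in>F. q1 \<in> g \<or> q2 \<in> g} \<subseteq> G" and fin: "finite G"
  shows "5 \<le> card G"
proof -
  have finQ: "finite Q" using K4w_finite[OF K] .
  define P where "P = {p. p \<subseteq> Q \<and> card p = 2}"
  define r where "r = Q - {q1,q2}"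
  have cP: "card P = 6" using pairs6 K unfolding P_def K4w_def by blast
  have cr: "card r = 2" using K q finQ unfolding r_def K4w_def by (simp add: card_Diff_subset)
  have rP: "r \<in> P" using cr unfolding P_def r_def by auto
  have finP: "finite P" using cP by (metis card.infinite zero_neq_numeral)
  have cP': "card (P - {r}) = 5" using cP rP finP by simp
  have mem: "\<forall>p\<in>P - {r}. q1 \<in> p \<or> q2 \<in> p"
  proof (intro ballI, rule ccontr)
    fix p assume p: "p \<in> P - {r}" "\<not> (q1 \<in> p \<or> q2 \<in> p)"
    then have "p \<subseteq> r" unfolding P_def r_def by auto
    moreover have "card p = card r" using p cr unfolding P_def by auto
    moreover have "finite r" using finQ unfolding r_def by auto
    ultimately have "p = r" using card_subset_eq by blast
    then show False using p by auto
  qed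
  have injf: "inj_on f (P - {r})" using K unfolding K4w_def P_def by (meson Diff_subset inj_on_subset)
  have cf: "card (f ` (P - {r})) = 5" using card_image[OF injf] cP' by simp
  have fG: "f ` (P - {r}) \<subseteq> G"
  proof
    fix g assume "g \<in> f ` (P - {r})"
    then obtain p where p: "p \<in> P - {r}" "g = f p" by auto
    then have "g \<in> F \<and> p \<subseteq> g" using K unfolding K4w_def P_def by auto
    then show "g \<in> G" using mem p sub by blast
  qed
  show ?thesis using card_mono[OF fin fG] cf by simp
qed

lemma K4w_all: assumes K: "K4w F Q f" and fin: "finite F" shows "6 \<le> card F"
proof -
  define P where "P = {p. p \<subseteq> Q \<and> card p = 2}"
  have cP: "card P = 6" using pairs6 K unfolding P_def K4w_def by blast
  have injf: "inj_on f P" using K unfolding K4w_def P_def by blast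
  have "f ` P \<subseteq> F" using K unfolding K4w_def P_def by auto
  then show ?thesis using card_mono[OF fin] card_image[OF injf] cP by metis
qed

lemma pull: fixes F :: "('a + 'b) set set" and E :: "'a set set"
  assumes K: "K4w F Q f" and Q: "Q \<subseteq> range Inl"
  and cond: "\<forall>g\<in>F. \<forall>x y. x \<noteq> y \<longrightarrow> Inl x \<in> g \<longrightarrow> Inl y \<in> g \<longrightarrow> g \<in> (image Inl) ` E"
  shows "has_berge_K4 E"
proof -
  define Q' where "Q' = Inl -` Q"
  have QQ: "Q = Inl ` Q'" using Q unfolding Q'_def by auto
  have cQ0: "card Q = card Q'" unfolding QQ by (rule card_image) (simp add: inj_on_def)
  then have cQ: "card Q' = 4" using K unfolding K4w_def by simp
  define f' where "f' p = Inl -` f (Inl ` p)" for p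
  have cimg: "card ((Inl :: 'a \<Rightarrow> 'a + 'b) ` p) = card p" for p
    by (rule card_image) (simp add: inj_on_def)
  have inP: "(Inl :: 'a \<Rightarrow> 'a + 'b) ` p \<subseteq> Q \<and> card ((Inl :: 'a \<Rightarrow> 'a + 'b) ` p) = 2"
    if p: "p \<subseteq> Q'" "card p = 2" for p
    using p QQ cimg[of p] by auto
  have key: "f (Inl ` p) \<in> F \<and> Inl ` p \<subseteq> f (Inl ` p) \<and> (\<exists>e0\<in>E. f (Inl ` p) = Inl ` e0)"
    if p: "p \<subseteq> Q'" "card p = 2" for p
  proof -
    have A: "f (Inl ` p) \<in> F \<and> Inl ` p \<subseteq> f (Inl ` p)" using K inP[OF p] unfolding K4w_def by blast
    obtain x y where xy: "p = {x,y}" "x \<noteq> y" using p(2) card_2_iff by metis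
    then have "Inl x \<in> f (Inl ` p)" "Inl y \<in> f (Inl ` p)" using A by auto
    then have "f (Inl ` p) \<in> (image Inl) ` E" using cond A xy(2) by blast
    then show ?thesis using A by blast
  qed
  have m: "f' p \<in> E \<and> p \<subseteq> f' p" if p: "p \<subseteq> Q'" "card p = 2" for p
  proof -
    obtain e0 where e0: "e0 \<in> E" "f (Inl ` p) = Inl ` e0" "Inl ` p \<subseteq> f (Inl ` p)" using key[OF p] by blast
    have "f' p = e0" unfolding f'_def e0(2) by auto
    moreover have "p \<subseteq> e0" using e0(2,3) by auto
    ultimately show ?thesis using e0(1) by simp
  qed
  have inj: "inj_on f' {p. p \<subseteq> Q' \<and> card p = 2}"
  proof (rule inj_onI)
    fix p1 p2 assume p1: "p1 \<in> {p. p \<subseteq> Q' \<and> card p = 2}" and p2: "p2 \<in> {p. p \<subseteq> Q' \<and> card p = 2}"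
      and eq: "f' p1 = f' p2"
    obtain e1 where e1: "f (Inl ` p1) = Inl ` e1" using key p1 by blast
    obtain e2 where e2: "f (Inl ` p2) = Inl ` e2" using key p2 by blast
    have "e1 = f' p1" "e2 = f' p2" unfolding f'_def e1 e2 by auto
    then have "f (Inl ` p1) = f (Inl ` p2)" using eq e1 e2 by simp
    moreover have "Inl ` p1 \<in> {p. p \<subseteq> Q \<and> card p = 2}" "Inl ` p2 \<in> {p. p \<subseteq> Q \<and> card p = 2}"
      using inP p1 p2 by auto
    ultimately have "(Inl :: 'a \<Rightarrow> 'a + 'b) ` p1 = Inl ` p2" using K unfolding K4w_def by (meson inj_onD)
    then show "p1 = p2" by (meson inj_Inl inj_image_eq_iff)
  qed
  have "K4w E Q' f'" unfolding K4w_def using cQ inj m by blast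
  then show ?thesis using has_K4_iff by blast
qed

lemma push: assumes h: "inj h" and FG: "\<forall>g\<in>F. h ` g \<in> G" and K: "has_berge_K4 F"
  shows "has_berge_K4 G"
proof -
  obtain Q f where K: "K4w F Q f" using K has_K4_iff by blast
  define Q' where "Q' = h ` Q"
  define f' where "f' p = h ` f (h -` p)" for p
  have pre: "h -` p \<subseteq> Q \<and> card (h -` p) = 2 \<and> h ` (h -` p) = p" if p: "p \<subseteq> Q'" "card p = 2" for p
  proof -
    have a: "h ` (h -` p) = p" using p unfolding Q'_def by auto
    moreover have "h -` p \<subseteq> Q"
    proof
      fix x assume "x \<in> h -` p"
      then have "h x \<in> h ` Q" using p unfolding Q'_def by auto
      then show "x \<in> Q" using h by (simp add: inj_image_mem_iff)
    qed
    moreover have "card (h ` (h -` p)) = card (h -` p)" by (rule card_image[OF inj_on_subset[OF h subset_UNIV]])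
    ultimately show ?thesis using p by simp
  qed
  have "card Q' = card Q" unfolding Q'_def by (rule card_image[OF inj_on_subset[OF h subset_UNIV]])
  then have cQ: "card Q' = 4" using K unfolding K4w_def by simp
  have m: "f' p \<in> G \<and> p \<subseteq> f' p" if p: "p \<subseteq> Q'" "card p = 2" for p
  proof -
    have "f (h -` p) \<in> F \<and> h -` p \<subseteq> f (h -` p)" using pre[OF p] K unfolding K4w_def by blast
    moreover have "h ` (h -` p) = p" using pre[OF p] by blast
    ultimately show ?thesis using FG unfolding f'_def by blast
  qed
  have inj: "inj_on f' {p. p \<subseteq> Q' \<and> card p = 2}"
  proof (rule inj_onI)
    fix p1 p2 assume p1: "p1 \<in> {p. p \<subseteq> Q' \<and> card p = 2}" and p2: "p2 \<in> {p. p \<subseteq> Q' \<and> card p = 2}"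
      and eq: "f' p1 = f' p2"
    have "f (h -` p1) = f (h -` p2)" using eq h unfolding f'_def by (simp add: inj_image_eq_iff)
    moreover have "h -` p1 \<in> {p. p \<subseteq> Q \<and> card p = 2}" "h -` p2 \<in> {p. p \<subseteq> Q \<and> card p = 2}"
      using pre p1 p2 by auto
    ultimately have "h -` p1 = h -` p2" using K unfolding K4w_def by (meson inj_onD)
    moreover have "h ` (h -` p1) = p1" "h ` (h -` p2) = p2" using pre p1 p2 by auto
    ultimately show "p1 = p2" by metis
  qed
  have "K4w G Q' f'" unfolding K4w_def using cQ inj m by blast
  then show ?thesis using has_K4_iff by blast
qed



lemma pair_cases: assumes "x \<in> {a,b,c,d}" "y \<in> {a,b,c,d}" "x \<noteq> y"
  shows "{x,y} \<in> {{a,b},{a,c},{a,d},{b,c},{b,d},{c,d}}"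
  using assms by (elim insertE emptyE; simp add: insert_commute)

lemma K4_intro:
  assumes "distinct [a,b,c,d]" "distinct [e1,e2,e3,e4,e5,e6]"
    "e1 \<in> F" "e2 \<in> F" "e3 \<in> F" "e4 \<in> F" "e5 \<in> F" "e6 \<in> F"
    "{a,b} \<subseteq> e1" "{a,c} \<subseteq> e2" "{a,d} \<subseteq> e3" "{b,c} \<subseteq> e4" "{b,d} \<subseteq> e5" "{c,d} \<subseteq> e6"
  shows "has_berge_K4 F"
proof -
  define f where "f p = (if a \<in> p \<and> b \<in> p then e1 else if a \<in> p \<and> c \<in> p then e2 else if a \<in> p \<and> d \<in> p then e3
     else if b \<in> p \<and> c \<in> p then e4 else if b \<in> p \<and> d \<in> p then e5 else e6)" for p
  define S where "S = {{a,b},{a,c},{a,d},{b,c},{b,d},{c,d}}"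
  have PS: "{p. p \<subseteq> {a,b,c,d} \<and> card p = 2} \<subseteq> S"
  proof
    fix p assume "p \<in> {p. p \<subseteq> {a,b,c,d} \<and> card p = 2}"
    then have p: "p \<subseteq> {a,b,c,d}" "card p = 2" by auto
    from p(2) obtain x y where xy: "p = {x,y}" "x \<noteq> y" by (auto simp: card_2_iff)
    have "x \<in> {a,b,c,d}" "y \<in> {a,b,c,d}" using p(1) xy(1) by auto
    then show "p \<in> S" unfolding S_def xy(1) using pair_cases xy(2) by blast
  qed
  have dd: "a \<noteq> b" "a \<noteq> c" "a \<noteq> d" "b \<noteq> c" "b \<noteq> d" "c \<noteq> d"
     "b \<noteq> a" "c \<noteq> a" "d \<noteq> a" "c \<noteq> b" "d \<noteq> b" "d \<noteq> c" using assms(1) by auto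
  have fv: "f {a,b} = e1" "f {a,c} = e2" "f {a,d} = e3" "f {b,c} = e4" "f {b,d} = e5" "f {c,d} = e6"
    unfolding f_def using dd by simp_all
  have SL: "S = set [{a,b},{a,c},{a,d},{b,c},{b,d},{c,d}]" unfolding S_def by simp
  have cS: "card S \<le> 6" unfolding SL by (metis card_length length_Cons list.size(3) numeral_eq_Suc pred_numeral_simps(1,2,3) semiring_norm(26,27,28,83))
  have fS: "f ` S = set [e1,e2,e3,e4,e5,e6]" unfolding S_def using fv by simp
  have cfS: "card (f ` S) = 6" unfolding fS using distinct_card[OF assms(2)] by simp
  have finS: "finite S" unfolding SL by simp
  have "card S = 6" using cS cfS card_image_le[OF finS, of f] by simp
  then have injS: "inj_on f S" using eq_card_imp_inj_on[OF finS] cfS by simp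
  have sub: "a \<in> e1" "b \<in> e1" "a \<in> e2" "c \<in> e2" "a \<in> e3" "d \<in> e3" "b \<in> e4" "c \<in> e4"
    "b \<in> e5" "d \<in> e5" "c \<in> e6" "d \<in> e6" using assms(9-14) by auto
  have memS: "f p \<in> F \<and> p \<subseteq> f p" if "p \<in> S" for p
    using that unfolding S_def by (elim insertE emptyE) (simp_all add: fv assms(3-8) sub)
  have c4: "card {a,b,c,d} = 4" using assms(1) by simp
  have injP: "inj_on f {p. p \<subseteq> {a,b,c,d} \<and> card p = 2}" using injS PS by (rule inj_on_subset)
  have "K4w F {a,b,c,d} f" unfolding K4w_def using c4 injP PS memS by blast
  then show ?thesis using has_K4_iff by blast
qed



lemma card2_le: "card {x,y} \<le> 2" using card_length[of "[x,y]"] by simp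
lemma card3_le: "card {x,y,z} \<le> 3" using card_length[of "[x,y,z]"] by simp

lemma free_k: fixes E :: "'a set set" and u v :: 'a
  assumes nE: "\<not> has_berge_K4 E" shows "\<not> has_berge_K4 (addT_E E k u v)"
proof
  assume "has_berge_K4 (addT_E E k u v)"
  then obtain Q f where K: "K4w (addT_E E k u v) Q f" using has_K4_iff by blast
  have "Q \<subseteq> range Inl"
  proof
    fix q assume q: "q \<in> Q"
    show "q \<in> range Inl"
    proof (cases q)
      case (Inl x) then show ?thesis by simp
    next
      case (Inr r)
      then obtain i j where r: "q = Inr (i,j)" by (cases r) auto
      define G where "G = ({{Inr (i,0), Inr (i,1), Inl u}, {Inr (i,0), Inr (i,1), Inl v}} :: ('a + nat \<times> nat) set set)"
      have sub: "{g \<in> addT_E E k u v. q \<in> g} \<subseteq> G" unfolding G_def addT_E_def r by auto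
      have "card G \<le> 2" unfolding G_def by (rule card2_le)
      moreover have "card G = 3" using K4w_deg[OF K q sub] \<open>card G \<le> 2\<close> unfolding G_def by simp
      ultimately show ?thesis by simp
    qed
  qed
  moreover have "\<forall>g\<in>addT_E E k u v. \<forall>x y. x \<noteq> y \<longrightarrow> Inl x \<in> g \<longrightarrow> Inl y \<in> g \<longrightarrow> g \<in> (image Inl) ` E"
    unfolding addT_E_def by auto
  ultimately have "has_berge_K4 E" using pull[OF K] by blast
  then show False using nE by simp
qed

lemma E_empty: assumes tg: "three_graph V E" and fin: "finite V" and Vs: "V \<subseteq> {u,v}" shows "E = {}"
proof (rule ccontr)
  assume "E \<noteq> {}" then obtain g where g: "g \<in> E" by blast
  then have "g \<subseteq> V" "card g = 3" using tg unfolding three_graph_def by auto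
  then have "card g \<le> card {u,v}" using Vs by (metis card_mono finite.emptyI finite.insertI subset_trans)
  then show False using card2_le[of u v] \<open>card g = 3\<close> by simp
qed

lemma g0_exists: fixes E :: "'a set set" and u v :: 'a
  assumes fin: "finite V" and tg: "three_graph V E" and nE: "\<not> has_berge_K4 E"
    and uV: "u \<in> V" and vV: "v \<in> V" and uv: "u \<noteq> v"
    and sat1: "berge_K4_saturated (addT_V V 1) (addT_E E 1 u v)"
  shows "\<exists>g0\<in>E. u \<in> g0 \<and> v \<in> g0"
proof (cases "\<exists>w\<in>V. w \<noteq> u \<and> w \<noteq> v")
  case True
  then obtain w where w: "w \<in> V" "w \<noteq> u" "w \<noteq> v" by blast
  define A where "A = (Inr (0,0) :: 'a + nat \<times> nat)"
  define B where "B = (Inr (0,1) :: 'a + nat \<times> nat)"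
  define e' where "e' = {A, B, Inl w}"
  define F' where "F' = insert e' (addT_E E 1 u v)"
  have e'V: "e' \<subseteq> addT_V V 1" unfolding e'_def A_def B_def addT_V_def using w by auto
  have e'c: "card e' = 3" unfolding e'_def A_def B_def by simp
  have e'n: "e' \<notin> addT_E E 1 u v"
  proof
    assume "e' \<in> addT_E E 1 u v"
    moreover have "A \<in> e'" "Inl w \<in> e'" unfolding e'_def by auto
    ultimately show False unfolding addT_E_def A_def using w by auto
  qed
  have "has_berge_K4 F'" using sat1 e'V e'c e'n unfolding berge_K4_saturated_def F'_def by blast
  then obtain Q f where K: "K4w F' Q f" using has_K4_iff by blast
  have cond: "\<forall>g\<in>F'. \<forall>x y. x \<noteq> y \<longrightarrow> Inl x \<in> g \<longrightarrow> Inl y \<in> g \<longrightarrow> g \<in> (image Inl) ` E"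
    unfolding F'_def e'_def A_def B_def addT_E_def by auto
  have QV: "q \<in> range Inl \<or> q = A \<or> q = B" if qQ: "q \<in> Q" for q
  proof -
    obtain g where "g \<in> F'" "q \<in> g" using K4w_cover[OF K qQ] by blast
    then show ?thesis unfolding F'_def e'_def A_def B_def addT_E_def by auto
  qed
  define G where "G = {{A,B,Inl u},{A,B,Inl v},e'}"
  have cG: "card G \<le> 3" unfolding G_def by (rule card3_le)
  have fG: "finite G" unfolding G_def by simp
  have subA: "{g\<in>F'. A \<in> g} \<subseteq> G" unfolding G_def F'_def e'_def A_def B_def addT_E_def by auto
  have subB: "{g\<in>F'. B \<in> g} \<subseteq> G" unfolding G_def F'_def e'_def A_def B_def addT_E_def by auto
  have AB: "A \<noteq> B" unfolding A_def B_def by simp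
  have side: "Inl u \<in> Q \<and> Inl v \<in> Q" if X: "X \<in> Q" "Y \<notin> Q" "{g\<in>F'. X \<in> g} \<subseteq> G"
    and GX: "G = {{X,Y,Inl u},{X,Y,Inl v},e'}" for X Y
  proof -
    have D: "card G = 3 \<and> (\<forall>g\<in>G. \<exists>x\<in>Q. x \<noteq> X \<and> f {X,x} = g)" using K4w_deg[OF K X(1) X(3) fG cG] .
    have "\<exists>x\<in>Q. x \<noteq> X \<and> f {X,x} = {X,Y,Inl u}" using D GX by auto
    then obtain x where x: "x \<in> Q" "x \<noteq> X" "f {X,x} = {X,Y,Inl u}" by blast
    then have "x \<in> {X,Y,Inl u}" using K4w_pair[OF K X(1) x(1)] by auto
    then have xu: "x = Inl u" using x X(2) by auto
    have "\<exists>x\<in>Q. x \<noteq> X \<and> f {X,x} = {X,Y,Inl v}" using D GX by auto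
    then obtain y where y: "y \<in> Q" "y \<noteq> X" "f {X,y} = {X,Y,Inl v}" by blast
    then have "y \<in> {X,Y,Inl v}" using K4w_pair[OF K X(1) y(1)] by auto
    then have yv: "y = Inl v" using y X(2) by auto
    show ?thesis using x(1) y(1) xu yv by simp
  qed
  have uvQ: "Inl u \<in> Q \<and> Inl v \<in> Q"
  proof (cases "A \<in> Q")
    case True
    show ?thesis
    proof (cases "B \<in> Q")
      case True
      have "{g\<in>F'. A \<in> g \<or> B \<in> g} \<subseteq> G" using subA subB by blast
      then have "5 \<le> card G" using K4w_two[OF K \<open>A \<in> Q\<close> True AB _ fG] by blast
      then show ?thesis using cG by simp
    next
      case False
      show ?thesis using side[OF \<open>A \<in> Q\<close> False subA] unfolding G_def by simp
    qed
  next
    case False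
    show ?thesis
    proof (cases "B \<in> Q")
      case True
      have "G = {{B,A,Inl u},{B,A,Inl v},e'}" unfolding G_def by (simp add: insert_commute)
      then show ?thesis using side[OF True False subB] by simp
    next
      case False
      have "Q \<subseteq> range Inl" using QV \<open>A \<notin> Q\<close> False by blast
      then have "has_berge_K4 E" using pull[OF K _ cond] by blast
      then show ?thesis using nE by simp
    qed
  qed
  have "Inl u \<noteq> (Inl v :: 'a + nat \<times> nat)" using uv by simp
  then have P: "f {Inl u, Inl v} \<in> F' \<and> Inl u \<in> f {Inl u, Inl v} \<and> Inl v \<in> f {Inl u, Inl v}"
    using K4w_pair[OF K] uvQ by blast
  then have "f {Inl u, Inl v} \<in> (image Inl) ` E" using cond uv by blast
  then show ?thesis using P by auto
next
  case False
  then have Vs: "V \<subseteq> {u,v}" by blast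
  have E0: "E = {}" using E_empty[OF tg fin Vs] .
  define A where "A = (Inr (0,0) :: 'a + nat \<times> nat)"
  define e' where "e' = {Inl u, Inl v, A}"
  define F' where "F' = insert e' (addT_E E 1 u v)"
  have e'V: "e' \<subseteq> addT_V V 1" unfolding e'_def A_def addT_V_def using uV vV by auto
  have e'c: "card e' = 3" unfolding e'_def A_def using uv by simp
  have e'n: "e' \<notin> addT_E E 1 u v"
  proof
    assume "e' \<in> addT_E E 1 u v"
    moreover have "A \<in> e'" "Inl u \<in> e'" "Inl v \<in> e'" unfolding e'_def by auto
    ultimately show False unfolding addT_E_def A_def using uv by auto
  qed
  have "has_berge_K4 F'" using sat1 e'V e'c e'n unfolding berge_K4_saturated_def F'_def by blast
  then obtain Q f where K: "K4w F' Q f" using has_K4_iff by blast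
  have FF: "F' = {e', {Inr (0,0), Inr (0,1), Inl u}, {Inr (0,0), Inr (0,1), Inl v}}"
    unfolding F'_def addT_E_def E0 by auto
  then have "card F' \<le> 3" using card3_le by metis
  moreover have "finite F'" using FF by simp
  ultimately show ?thesis using K4w_all[OF K] by simp
qed

lemma part2: fixes E :: "'a set set" and u v u' v' :: 'a
  assumes nE: "\<not> has_berge_K4 E" and uv: "u \<noteq> v" and uv': "u' \<noteq> v'" and ne: "{u,v} \<noteq> {u',v'}"
  shows "\<not> berge_K4_saturated (addT2_V V) (addT2_E E u v u' v')"
proof
  assume sat: "berge_K4_saturated (addT2_V V) (addT2_E E u v u' v')"
  define A1 where "A1 = (Inr (0,0) :: 'a + nat \<times> nat)"
  define A2 where "A2 = (Inr (0,1) :: 'a + nat \<times> nat)"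
  define A3 where "A3 = (Inr (1,0) :: 'a + nat \<times> nat)"
  define A4 where "A4 = (Inr (1,1) :: 'a + nat \<times> nat)"
  define e where "e = {A1, A2, A3}"
  define F where "F = insert e (addT2_E E u v u' v')"
  have eV: "e \<subseteq> addT2_V V" unfolding e_def A1_def A2_def A3_def addT2_V_def by auto
  have ec: "card e = 3" unfolding e_def A1_def A2_def A3_def by simp
  have en: "e \<notin> addT2_E E u v u' v'"
  proof
    assume "e \<in> addT2_E E u v u' v'"
    moreover have "A1 \<in> e" "\<forall>x. Inl x \<notin> e" unfolding e_def A1_def A2_def A3_def by auto
    ultimately show False unfolding addT2_E_def A1_def by blast
  qed
  have "has_berge_K4 F" using sat eV ec en unfolding berge_K4_saturated_def F_def by blast
  then obtain Q f where K: "K4w F Q f" using has_K4_iff by blast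
  have cond: "\<forall>g\<in>F. \<forall>x y. x \<noteq> y \<longrightarrow> Inl x \<in> g \<longrightarrow> Inl y \<in> g \<longrightarrow> g \<in> (image Inl) ` E"
    unfolding F_def e_def A1_def A2_def A3_def addT2_E_def by auto
  have QV: "q \<in> range Inl \<or> q = A1 \<or> q = A2 \<or> q = A3 \<or> q = A4" if qQ: "q \<in> Q" for q
  proof -
    obtain g where "g \<in> F" "q \<in> g" using K4w_cover[OF K qQ] by blast
    then show ?thesis unfolding F_def e_def A1_def A2_def A3_def A4_def addT2_E_def by auto
  qed
  have A4Q: "A4 \<notin> Q"
  proof
    assume a: "A4 \<in> Q"
    define G4 where "G4 = {{A3,A4,Inl u'},{A3,A4,Inl v'}}"
    have sub: "{g\<in>F. A4 \<in> g} \<subseteq> G4"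
      unfolding G4_def F_def e_def A1_def A2_def A3_def A4_def addT2_E_def by auto
    have "card G4 \<le> 2" unfolding G4_def by (rule card2_le)
    then show False using K4w_deg[OF K a sub] unfolding G4_def by simp
  qed
  define GA where "GA = {{A1,A2,Inl u},{A1,A2,Inl v},e}"
  have cGA: "card GA \<le> 3" unfolding GA_def by (rule card3_le)
  have fGA: "finite GA" unfolding GA_def by simp
  have sub1: "{g\<in>F. A1 \<in> g} \<subseteq> GA"
    unfolding GA_def F_def e_def A1_def A2_def A3_def addT2_E_def by auto
  have sub2: "{g\<in>F. A2 \<in> g} \<subseteq> GA"
    unfolding GA_def F_def e_def A1_def A2_def A3_def addT2_E_def by auto
  define G3 where "G3 = {{A3,A4,Inl u'},{A3,A4,Inl v'},e}"
  have cG3: "card G3 \<le> 3" unfolding G3_def by (rule card3_le)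
  have fG3: "finite G3" unfolding G3_def by simp
  have sub3: "{g\<in>F. A3 \<in> g} \<subseteq> G3"
    unfolding G3_def F_def e_def A1_def A2_def A3_def A4_def addT2_E_def by auto
  have fin: False if Q3: "Inl u \<in> Q" "Inl v \<in> Q" "A3 \<in> Q"
  proof -
    have "A3 \<noteq> Inl u" "A3 \<noteq> Inl v" unfolding A3_def by auto
    then have P: "f {A3, Inl u} \<in> F \<and> A3 \<in> f {A3, Inl u} \<and> Inl u \<in> f {A3, Inl u}"
      "f {A3, Inl v} \<in> F \<and> A3 \<in> f {A3, Inl v} \<and> Inl v \<in> f {A3, Inl v}"
      using K4w_pair[OF K] Q3 by blast+
    have "u = u' \<or> u = v'" using P(1)
      unfolding F_def e_def A1_def A2_def A3_def A4_def addT2_E_def by auto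
    moreover have "v = u' \<or> v = v'" using P(2)
      unfolding F_def e_def A1_def A2_def A3_def A4_def addT2_E_def by auto
    ultimately show False using uv uv' ne by auto
  qed
  have side: "Inl u \<in> Q \<and> Inl v \<in> Q \<and> A3 \<in> Q" if X: "X \<in> Q" "Y \<notin> Q" "{g\<in>F. X \<in> g} \<subseteq> GA"
    and XY: "X \<in> {A1,A2}" "Y \<in> {A1,A2}"
    and GX: "GA = {{X,Y,Inl u},{X,Y,Inl v},{X,Y,A3}}" for X Y
  proof -
    have D: "card GA = 3 \<and> (\<forall>g\<in>GA. \<exists>x\<in>Q. x \<noteq> X \<and> f {X,x} = g)" using K4w_deg[OF K X(1) X(3) fGA cGA] .
    have mem: "z \<in> Q" if z: "{X,Y,z} \<in> GA" "z \<noteq> X" "z \<noteq> Y" for z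
    proof -
      obtain x where x: "x \<in> Q" "x \<noteq> X" "f {X,x} = {X,Y,z}" using D z(1) by metis
      then have "x \<in> {X,Y,z}" using K4w_pair[OF K X(1) x(1)] by auto
      then have "x = z" using x X(2) by auto
      then show ?thesis using x(1) by simp
    qed
    have d: "Inl u \<noteq> X" "Inl u \<noteq> Y" "Inl v \<noteq> X" "Inl v \<noteq> Y" "A3 \<noteq> X" "A3 \<noteq> Y"
      using XY unfolding A1_def A2_def A3_def by auto
    show ?thesis using mem d GX by auto
  qed
  have d3: "A3 \<noteq> X" "A3 \<noteq> Y" if "X \<in> {A1,A2}" "Y \<in> {A1, A2}" for X Y
    using that unfolding A1_def A2_def A3_def by auto
  show False
  proof (cases "A1 \<in> Q")
    case True
    show ?thesis
    proof (cases "A2 \<in> Q")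
      case True
      have AB: "A1 \<noteq> A2" unfolding A1_def A2_def by simp
      have "{g\<in>F. A1 \<in> g \<or> A2 \<in> g} \<subseteq> GA" using sub1 sub2 by blast
      then have "5 \<le> card GA" using K4w_two[OF K \<open>A1 \<in> Q\<close> True AB _ fGA] by blast
      then show ?thesis using cGA by simp
    next
      case False
      have "GA = {{A1,A2,Inl u},{A1,A2,Inl v},{A1,A2,A3}}" unfolding GA_def e_def by simp
      moreover have "A1 \<in> {A1,A2}" "A2 \<in> {A1,A2}" by auto
      ultimately show ?thesis using side[OF \<open>A1 \<in> Q\<close> False sub1] fin by blast
    qed
  next
    case False
    show ?thesis
    proof (cases "A2 \<in> Q")
      case True
      have "GA = {{A2,A1,Inl u},{A2,A1,Inl v},{A2,A1,A3}}" unfolding GA_def e_def by (simp add: insert_commute)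
      moreover have "A2 \<in> {A1,A2}" "A1 \<in> {A1,A2}" by auto
      ultimately show ?thesis using side[OF True False sub2] fin by blast
    next
      case False
      show ?thesis
      proof (cases "A3 \<in> Q")
        case True
        have "\<exists>x\<in>Q. x \<noteq> A3 \<and> f {A3,x} = e" using K4w_deg[OF K True sub3 fG3 cG3] unfolding G3_def by blast
        then obtain x where x: "x \<in> Q" "x \<noteq> A3" "f {A3,x} = e" by blast
        then have "x \<in> e" using K4w_pair[OF K True x(1)] by auto
        then show ?thesis using x \<open>A1 \<notin> Q\<close> \<open>A2 \<notin> Q\<close> unfolding e_def by auto
      next
        case False
        have "Q \<subseteq> range Inl" using QV A4Q \<open>A1 \<notin> Q\<close> \<open>A2 \<notin> Q\<close> False by blast
        then have "has_berge_K4 E" using pull[OF K _ cond] by blast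
        then show ?thesis using nE by simp
      qed
    qed
  qed
qed



lemma tg_k: fixes E :: "'a set set" and u v :: 'a
  assumes tg: "three_graph V E" and uV: "u \<in> V" and vV: "v \<in> V"
  shows "three_graph (addT_V V k) (addT_E E k u v)"
  unfolding three_graph_def
proof
  fix g assume g: "g \<in> addT_E E k u v"
  show "g \<subseteq> addT_V V k \<and> card g = 3"
  proof (cases "g \<in> (image Inl) ` E")
    case True
    then obtain g0 where g0: "g0 \<in> E" "g = Inl ` g0" by blast
    then have "g0 \<subseteq> V" "card g0 = 3" using tg unfolding three_graph_def by auto
    moreover have "card (Inl ` g0 :: ('a + nat \<times> nat) set) = card g0" by (rule card_image) (simp add: inj_on_def)
    ultimately show ?thesis using g0 unfolding addT_V_def by auto
  next
    case False
    then obtain i w where "i < k" "w = u \<or> w = v" "g = {Inr (i,0), Inr (i,1), Inl w}"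
      using g unfolding addT_E_def by blast
    then show ?thesis using uV vV unfolding addT_V_def by auto
  qed
qed

lemma sat_clause: fixes E :: "'a set set" and u v :: 'a and e :: "('a + nat \<times> nat) set"
  assumes sat: "berge_K4_saturated V E" and uV: "u \<in> V" and vV: "v \<in> V" and uv: "u \<noteq> v"
    and sat1: "berge_K4_saturated (addT_V V 1) (addT_E E 1 u v)"
    and g0: "\<exists>g0\<in>E. u \<in> g0 \<and> v \<in> g0"
    and eV: "e \<subseteq> addT_V V k" and ec: "card e = 3" and en: "e \<notin> addT_E E k u v"
  shows "has_berge_K4 (insert e (addT_E E k u v))"
proof (cases "e \<subseteq> range Inl")
  case True
  define e0 where "e0 = Inl -` e"
  have ee: "e = Inl ` e0" unfolding e0_def using True by auto
  have "card e = card e0" unfolding ee by (rule card_image) (simp add: inj_on_def)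
  then have e0c: "card e0 = 3" using ec by simp
  have e0V: "e0 \<subseteq> V" using eV unfolding e0_def addT_V_def by auto
  have e0n: "e0 \<notin> E" using en unfolding ee addT_E_def by auto
  have "has_berge_K4 (insert e0 E)" using sat e0c e0V e0n unfolding berge_K4_saturated_def by blast
  moreover have "\<forall>g\<in>insert e0 E. Inl ` g \<in> insert e (addT_E E k u v)" unfolding ee addT_E_def by auto
  ultimately show ?thesis using push[of Inl] by (metis inj_Inl)
next
  case False
  then obtain i s where is_: "Inr (i,s) \<in> e" by (metis (no_types, opaque_lifting) old.prod.exhaust rangeI subsetI sum.exhaust)
  have ik: "i < k" "s < 2" using eV is_ unfolding addT_V_def by auto
  show ?thesis
  proof (cases "\<exists>j t. Inr (j,t) \<in> e \<and> j \<noteq> i")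
    case True
    then obtain j t where jt: "Inr (j,t) \<in> e" "j \<noteq> i" by blast
    have jk: "j < k" "t < 2" using eV jt unfolding addT_V_def by auto
    obtain g where g: "g \<in> E" "u \<in> g" "v \<in> g" using g0 by blast
    have s01: "s = 0 \<or> s = 1" "t = 0 \<or> t = 1" using ik jk by auto
    let ?F = "insert e (addT_E E k u v)"
    show ?thesis
    proof (rule K4_intro[of "Inl u" "Inl v" "Inr (i,s)" "Inr (j,t)" "Inl ` g"
          "{Inr (i,0), Inr (i,1), Inl u}" "{Inr (j,0), Inr (j,1), Inl u}"
          "{Inr (i,0), Inr (i,1), Inl v}" "{Inr (j,0), Inr (j,1), Inl v}" e])
      show "distinct [Inl u, Inl v, Inr (i, s), Inr (j, t)]" using uv jt by auto
      show "distinct [Inl ` g, {Inr (i,0), Inr (i,1), Inl u}, {Inr (j,0), Inr (j,1), Inl u},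
          {Inr (i,0), Inr (i,1), Inl v}, {Inr (j,0), Inr (j,1), Inl v}, e]"
      proof -
        have nI: "A \<noteq> B" if "x \<in> A" "x \<notin> B" for x and A B :: "('a + nat \<times> nat) set" using that by blast
        have nJ: "A \<noteq> B" if "x \<notin> A" "x \<in> B" for x and A B :: "('a + nat \<times> nat) set" using that by blast
        have n12: "(Inl ` g :: ('a + nat \<times> nat) set) \<noteq> {Inr (i,0), Inr (i,1), Inl u}" by (rule nJ[of "Inr (i, 0::nat)"]) auto
        have n13: "(Inl ` g :: ('a + nat \<times> nat) set) \<noteq> {Inr (j,0), Inr (j,1), Inl u}" by (rule nJ[of "Inr (j, 0::nat)"]) auto
        have n14: "(Inl ` g :: ('a + nat \<times> nat) set) \<noteq> {Inr (i,0), Inr (i,1), Inl v}" by (rule nJ[of "Inr (i, 0::nat)"]) auto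
        have n15: "(Inl ` g :: ('a + nat \<times> nat) set) \<noteq> {Inr (j,0), Inr (j,1), Inl v}" by (rule nJ[of "Inr (j, 0::nat)"]) auto
        have n16: "(Inl ` g :: ('a + nat \<times> nat) set) \<noteq> e" by (rule nJ[of "Inr (i,s) :: 'a + nat \<times> nat"]) (use is_ in auto)
        have n23: "({Inr (i,0), Inr (i,1), Inl u} :: ('a + nat \<times> nat) set) \<noteq> {Inr (j,0), Inr (j,1), Inl u}" by (rule nI[of "Inr (i, 0::nat)"]) (use jt in auto)
        have n24: "({Inr (i,0), Inr (i,1), Inl u} :: ('a + nat \<times> nat) set) \<noteq> {Inr (i,0), Inr (i,1), Inl v}" by (rule nI[of "Inl u :: 'a + nat \<times> nat"]) (use uv in auto)
        have n25: "({Inr (i,0), Inr (i,1), Inl u} :: ('a + nat \<times> nat) set) \<noteq> {Inr (j,0), Inr (j,1), Inl v}" by (rule nI[of "Inr (i, 0::nat)"]) (use jt in auto)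
        have n26: "({Inr (i,0), Inr (i,1), Inl u} :: ('a + nat \<times> nat) set) \<noteq> e" by (rule nJ[of "Inr (j,t) :: 'a + nat \<times> nat"]) (use jt in auto)
        have n34: "({Inr (j,0), Inr (j,1), Inl u} :: ('a + nat \<times> nat) set) \<noteq> {Inr (i,0), Inr (i,1), Inl v}" by (rule nI[of "Inr (j, 0::nat)"]) (use jt in auto)
        have n35: "({Inr (j,0), Inr (j,1), Inl u} :: ('a + nat \<times> nat) set) \<noteq> {Inr (j,0), Inr (j,1), Inl v}" by (rule nI[of "Inl u :: 'a + nat \<times> nat"]) (use uv in auto)
        have n36: "({Inr (j,0), Inr (j,1), Inl u} :: ('a + nat \<times> nat) set) \<noteq> e" by (rule nJ[of "Inr (i,s) :: 'a + nat \<times> nat"]) (use jt is_ in auto)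
        have n45: "({Inr (i,0), Inr (i,1), Inl v} :: ('a + nat \<times> nat) set) \<noteq> {Inr (j,0), Inr (j,1), Inl v}" by (rule nI[of "Inr (i, 0::nat)"]) (use jt in auto)
        have n46: "({Inr (i,0), Inr (i,1), Inl v} :: ('a + nat \<times> nat) set) \<noteq> e" by (rule nJ[of "Inr (j,t) :: 'a + nat \<times> nat"]) (use jt in auto)
        have n56: "({Inr (j,0), Inr (j,1), Inl v} :: ('a + nat \<times> nat) set) \<noteq> e" by (rule nJ[of "Inr (i,s) :: 'a + nat \<times> nat"]) (use jt is_ in auto)
        show ?thesis using n12 n13 n14 n15 n16 n23 n24 n25 n26 n34 n35 n36 n45 n46 n56
          by (simp only: distinct.simps list.set insert_iff empty_iff de_Morgan_disj simp_thms)
      qed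
      show "Inl ` g \<in> ?F" using g unfolding addT_E_def by auto
      show "{Inr (i,0), Inr (i,1), Inl u} \<in> ?F" using ik unfolding addT_E_def by auto
      show "{Inr (j,0), Inr (j,1), Inl u} \<in> ?F" using jk unfolding addT_E_def by auto
      show "{Inr (i,0), Inr (i,1), Inl v} \<in> ?F" using ik unfolding addT_E_def by auto
      show "{Inr (j,0), Inr (j,1), Inl v} \<in> ?F" using jk unfolding addT_E_def by auto
      show "e \<in> ?F" by simp
      show "{Inl u, Inl v} \<subseteq> Inl ` g" using g by auto
      show "{Inl u, Inr (i, s)} \<subseteq> {Inr (i,0), Inr (i,1), Inl u}" using s01 by auto
      show "{Inl u, Inr (j, t)} \<subseteq> {Inr (j,0), Inr (j,1), Inl u}" using s01 by auto
      show "{Inl v, Inr (i, s)} \<subseteq> {Inr (i,0), Inr (i,1), Inl v}" using s01 by auto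
      show "{Inl v, Inr (j, t)} \<subseteq> {Inr (j,0), Inr (j,1), Inl v}" using s01 by auto
      show "{Inr (i, s), Inr (j, t)} \<subseteq> e" using is_ jt by auto
    qed
  next
    case False
    then have onlyi: "\<And>j t. Inr (j,t) \<in> e \<Longrightarrow> j = i" by blast
    define \<sigma> where "\<sigma> j = (if j = 0 then i else if j = i then 0 else j)" for j :: nat
    have ss: "\<sigma> (\<sigma> j) = j" for j unfolding \<sigma>_def by auto
    have si: "\<sigma> i = 0" "\<sigma> 0 = i" unfolding \<sigma>_def by auto
    define h where "h z = (case z of Inl x \<Rightarrow> Inl x | Inr p \<Rightarrow> Inr (\<sigma> (fst p), snd p))"
      for z :: "'a + nat \<times> nat"
    have hI: "h (Inl x) = Inl x" for x unfolding h_def by simp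
    have hR: "h (Inr (j,t)) = Inr (\<sigma> j, t)" for j t unfolding h_def by simp
    have hh: "h (h z) = z" for z
      by (cases z) (auto simp: hI hR ss h_def)
    have injh: "inj h" by (metis hh injI)
    define e' where "e' = h ` e"
    have he': "h ` e' = e" unfolding e'_def image_image hh by simp
    have e'V: "e' \<subseteq> addT_V V 1"
    proof
      fix z assume "z \<in> e'"
      then obtain y where y: "y \<in> e" "z = h y" unfolding e'_def by blast
      show "z \<in> addT_V V 1"
      proof (cases y)
        case (Inl x) then show ?thesis using y eV unfolding addT_V_def by (auto simp: hI)
      next
        case (Inr p)
        then obtain j t where p: "y = Inr (j,t)" by (cases p) auto
        then have "j = i" "t < 2" using onlyi y eV unfolding addT_V_def by auto
        then show ?thesis using y p si unfolding addT_V_def by (auto simp: hR)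
      qed
    qed
    have e'c: "card e' = 3" unfolding e'_def using ec card_image[OF inj_on_subset[OF injh subset_UNIV]] by simp
    have hE: "h ` g \<in> addT_E E k u v" if g: "g \<in> addT_E E 1 u v" for g
    proof (cases "g \<in> (image Inl) ` E")
      case True
      then obtain g0 where g0: "g0 \<in> E" "g = Inl ` g0" by blast
      have "h ` g = Inl ` g0" unfolding g0(2) image_image hI by simp
      then show ?thesis using g0 unfolding addT_E_def by auto
    next
      case False
      then obtain w where w: "w = u \<or> w = v" "g = {Inr (0,0), Inr (0,1), Inl w}"
        using g unfolding addT_E_def by auto
      have "h ` g = {Inr (i,0), Inr (i,1), Inl w}" unfolding w(2) using si by (simp add: hI hR)
      then show ?thesis using w ik unfolding addT_E_def by auto
    qed
    have e'n: "e' \<notin> addT_E E 1 u v" using hE[of e'] he' en by auto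
    have "has_berge_K4 (insert e' (addT_E E 1 u v))"
      using sat1 e'V e'c e'n unfolding berge_K4_saturated_def by blast
    moreover have "\<forall>g\<in>insert e' (addT_E E 1 u v). h ` g \<in> insert e (addT_E E k u v)"
      using hE he' by auto
    ultimately show ?thesis using push[OF injh] by blast
  qed
qed


theorem lemma2p1:
  fixes V :: "'a set" and E :: "'a set set" and u v :: 'a
  assumes "finite V"
    and "berge_K4_saturated V E"
    and "u \<in> V" and "v \<in> V" and "u \<noteq> v"
  shows "(berge_K4_saturated (addT_V V 1) (addT_E E 1 u v) \<longrightarrow>
            (\<forall>k::nat. k \<ge> 1 \<longrightarrow> berge_K4_saturated (addT_V V k) (addT_E E k u v)))
       \<and> (\<forall>u' v'. u' \<in> V \<longrightarrow> v' \<in> V \<longrightarrow> u' \<noteq> v' \<longrightarrow> {u, v} \<noteq> {u', v'} \<longrightarrow>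
            \<not> berge_K4_saturated (addT2_V V) (addT2_E E u v u' v'))"
proof -
  have tg: "three_graph V E" and nE: "\<not> has_berge_K4 E" using assms(2) unfolding berge_K4_saturated_def by auto
  have P1: "berge_K4_saturated (addT_V V 1) (addT_E E 1 u v) \<longrightarrow>
            (\<forall>k::nat. k \<ge> 1 \<longrightarrow> berge_K4_saturated (addT_V V k) (addT_E E k u v))"
  proof (intro impI allI)
    fix k :: nat
    assume sat1: "berge_K4_saturated (addT_V V 1) (addT_E E 1 u v)"
    have g0: "\<exists>g0\<in>E. u \<in> g0 \<and> v \<in> g0" by (rule g0_exists[OF assms(1) tg nE assms(3,4,5) sat1])
    show "berge_K4_saturated (addT_V V k) (addT_E E k u v)" unfolding berge_K4_saturated_def
      using tg_k[OF tg assms(3,4)] free_k[OF nE] sat_clause[OF assms(2) assms(3,4,5) sat1 g0] by blast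
  qed
  have P2: "\<forall>u' v'. u' \<in> V \<longrightarrow> v' \<in> V \<longrightarrow> u' \<noteq> v' \<longrightarrow> {u, v} \<noteq> {u', v'} \<longrightarrow>
            \<not> berge_K4_saturated (addT2_V V) (addT2_E E u v u' v')"
    using part2[OF nE assms(5)] by blast
  show ?thesis using P1 P2 by blast
qed

end
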